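(* Let $R$ be an associative ring with identity $1$ and with an involution $*$, and let $p,q\in R$ be projections. Then the following statements are equivalent: (1) $1-pq$ is Moore–Penrose invertible; (2) $1-pqp$ is Moore–Penrose invertible; (3) $p-pqp$ is Moore–Penrose invertible; (4) $1-qp$ is Moore–Penrose invertible; (5) $1-qpq$ is Moore–Penrose invertible; (6) $q-qpq$ is Moore–Penrose invertible.
   Context: An involution on $R$ is a map $a\mapsto a^*$ with $(a^* )^*=a$, $(a+b)^*=a^*+b^*$, $(ab)^*=b^*a^*$. An element $a\in R$ is Moore–Penrose (MP) invertible if there exists $b\in R$ with $aba=a$, $bab=b$, $(ab)^*=ab$, $(ba)^*=ba$; such $b$ is unique and denoted $a^{\dagger}$. A projection is an element $p$ with $p^2=p=p^*$. *)

theory Defs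
  imports Main
begin

class ring_invol = ring_1 +
  fixes invol :: "'a \<Rightarrow> 'a"  ("_\<^sup>\<star>" [1000] 999)
  assumes invol_invol: "invol (invol a) = a"
    and invol_add: "invol (a + b) = invol a + invol b"
    and invol_mult: "invol (a * b) = invol b * invol a"
begin

definition MP_inverse :: "'a \<Rightarrow> 'a \<Rightarrow> bool" where
  "MP_inverse a b \<longleftrightarrow> a * b * a = a \<and> b * a * b = b \<and>
     invol (a * b) = a * b \<and> invol (b * a) = b * a"

definition MP_invertible :: "'a \<Rightarrow> bool" where
  "MP_invertible a \<longleftrightarrow> (\<exists>b. MP_inverse a b)"

definition projection :: "'a \<Rightarrow> bool" where
  "projection p \<longleftrightarrow> p * p = p \<and> invol p = p"

end

end

theory Submission
  imports Defs
begin

context ring_invol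
begin

lemma invol_0[simp]: "invol 0 = 0"
proof -
  have "invol 0 = invol (0 + 0)" by simp
  also have "\<dots> = invol 0 + invol 0" by (rule invol_add)
  finally have "invol 0 = invol 0 + invol 0" .
  then show ?thesis by simp
qed

lemma invol_1[simp]: "invol 1 = 1"
proof -
  have "invol 1 = invol 1 * invol (invol 1)" by (simp add: invol_invol)
  also have "\<dots> = invol (invol 1 * 1)" by (rule invol_mult[symmetric])
  also have "\<dots> = 1" by (simp add: invol_invol)
  finally show ?thesis .
qed

lemma invol_uminus[simp]: "invol (- a) = - invol a"
proof -
  have "invol a + invol (- a) = invol (a + - a)" by (rule invol_add[symmetric])
  also have "\<dots> = 0" by simp
  finally show ?thesis by (rule minus_unique[symmetric])
qed

lemma invol_diff[simp]: "invol (a - b) = invol a - invol b"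
  by (simp only: diff_conv_add_uminus invol_add invol_uminus)

declare invol_invol[simp] invol_add[simp] invol_mult[simp]

definition has14 :: "'a \<Rightarrow> bool" where
  "has14 a \<longleftrightarrow> (\<exists>s. a * s * a = a \<and> invol (s * a) = s * a)"

definition has13 :: "'a \<Rightarrow> bool" where
  "has13 a \<longleftrightarrow> (\<exists>u. a * u * a = a \<and> invol (a * u) = a * u)"

definition cinv :: "'a \<Rightarrow> bool" where
  "cinv a \<longleftrightarrow> (\<exists>z. a * z = z * a \<and> a * z * a = a)"

lemma has13_iff: "has13 a \<longleftrightarrow> has14 (invol a)"
proof
  assume "has13 a"
  then obtain u where u: "a * u * a = a" "invol (a * u) = a * u" unfolding has13_def by blast
  have "invol a * invol u * invol a = invol a" using arg_cong[OF u(1), of invol] by (simp add: mult.assoc)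
  moreover have "invol (invol u * invol a) = invol u * invol a" using u(2) by simp
  ultimately show "has14 (invol a)" unfolding has14_def by blast
next
  assume "has14 (invol a)"
  then obtain s where s: "invol a * s * invol a = invol a" "invol (s * invol a) = s * invol a"
    unfolding has14_def by blast
  have "a * invol s * a = a" using arg_cong[OF s(1), of invol] by (simp add: mult.assoc)
  moreover have "invol (a * invol s) = a * invol s" using s(2) by simp
  ultimately show "has13 a" unfolding has13_def by blast
qed

lemma MP_iff: "MP_invertible a \<longleftrightarrow> has13 a \<and> has14 a"
proof
  assume "MP_invertible a"
  then obtain b where b: "a * b * a = a" "b * a * b = b" "invol (a * b) = a * b" "invol (b * a) = b * a"
    unfolding MP_invertible_def MP_inverse_def by blast
  then show "has13 a \<and> has14 a" unfolding has13_def has14_def by blast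
next
  assume "has13 a \<and> has14 a"
  then obtain u s where u: "a * u * a = a" "invol (a * u) = a * u"
    and s: "a * s * a = a" "invol (s * a) = s * a"
    unfolding has13_def has14_def by blast
  define b where "b = s * a * u"
  have ab: "a * b = a * u" unfolding b_def using s(1) by (simp add: mult.assoc[symmetric])
  have ba: "b * a = s * a" unfolding b_def using u(1) by (simp add: mult.assoc)
  have "a * b * a = a" using ab u(1) by simp
  moreover have "b * a * b = b" using ba unfolding b_def
    by (metis mult.assoc s(1))
  moreover have "invol (a * b) = a * b" by (simp only: ab u(2))
  moreover have "invol (b * a) = b * a" by (simp only: ba s(2))
  ultimately show "MP_invertible a" unfolding MP_invertible_def MP_inverse_def
    by blast
qed

lemma has14_mult:
  assumes "h * g = 1" "has14 m"
  shows "has14 (g * m)"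
proof -
  obtain s where s: "m * s * m = m" "invol (s * m) = s * m" using assms(2) unfolding has14_def by blast
  have "g * m * (s * h) * (g * m) = g * (m * s * m)"
    by (simp add: mult.assoc[symmetric]) (simp add: mult.assoc assms(1))
  also have "\<dots> = g * m" using s(1) by simp
  finally have 1: "g * m * (s * h) * (g * m) = g * m" .
  have 2: "s * h * (g * m) = s * m" by (simp add: mult.assoc[symmetric]) (simp add: mult.assoc assms(1))
  have 3: "invol (s * h * (g * m)) = s * h * (g * m)" by (simp only: 2 s(2))
  show ?thesis unfolding has14_def using 1 3 by blast
qed

lemma has14_mult_iff:
  assumes "h * g = 1" "g * h = 1"
  shows "has14 (g * m) \<longleftrightarrow> has14 m"
proof
  assume "has14 (g * m)"
  then have "has14 (h * (g * m))" using has14_mult assms(2) by blast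
  then show "has14 m" by (simp add: mult.assoc[symmetric] assms(1))
qed (use has14_mult assms in blast)

lemma MP_unique:
  assumes "MP_inverse a b" "MP_inverse a c"
  shows "b = c"
proof -
  have b: "a * b * a = a" "b * a * b = b" "invol (a * b) = a * b" "invol (b * a) = b * a"
    and c: "a * c * a = a" "c * a * c = c" "invol (a * c) = a * c" "invol (c * a) = c * a"
    using assms unfolding MP_inverse_def by auto
  have "b = b * (a * b)" using b(2) by (simp add: mult.assoc)
  also have "\<dots> = b * invol (a * b)" using b(3) by simp
  also have "\<dots> = b * invol b * invol (a * c * a)" using c(1) by (simp add: mult.assoc)
  also have "\<dots> = b * (invol b * invol a) * (invol c * invol a)" by (simp add: mult.assoc)
  also have "\<dots> = b * (a * b) * (a * c)" using b(3) c(3) by simp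
  also have "\<dots> = b * a * c" using b(2) by (metis mult.assoc)
  finally have 1: "b = b * a * c" .
  have "c = (c * a) * c" using c(2) by simp
  also have "\<dots> = invol (c * a) * c" using c(4) by simp
  also have "\<dots> = invol (a * b * a) * invol c * c" using b(1) by (simp add: mult.assoc)
  also have "\<dots> = (invol a * invol b) * (invol a * invol c) * c" by (simp add: mult.assoc)
  also have "\<dots> = (b * a) * (c * a) * c" using b(4) c(4) by simp
  also have "\<dots> = b * a * c" using c(2) by (metis mult.assoc)
  finally show ?thesis using 1 by simp
qed

lemma SA_MP_cinv:
  assumes "invol m = m" "MP_invertible m"
  shows "cinv m"
proof -
  obtain b where b: "MP_inverse m b" using assms(2) unfolding MP_invertible_def by blast
  have b1: "m * b * m = m" and b2: "b * m * b = b" and b3: "invol (m * b) = m * b"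
    and b4: "invol (b * m) = b * m" using b unfolding MP_inverse_def by auto
  have "m * invol b * m = m" using arg_cong[OF b1, of invol] assms(1) by (simp add: mult.assoc)
  moreover have "invol b * m * invol b = invol b" using arg_cong[OF b2, of invol] assms(1)
    by (simp add: mult.assoc)
  moreover have "invol (m * invol b) = m * invol b" using b4 assms(1) by simp
  moreover have "invol (invol b * m) = invol b * m" using b3 assms(1) by simp
  ultimately have "MP_inverse m (invol b)" unfolding MP_inverse_def by blast
  then have bb: "invol b = b" using MP_unique b by blast
  have "m * b = b * m" using b3 bb assms(1) by simp
  then show ?thesis using b unfolding cinv_def MP_inverse_def by blast
qed

lemma group_unique:
  assumes "m * y = y * m" "m * y * m = m" "y * m * y = y"
    and "m * z = z * m" "m * z * m = m" "z * m * z = z"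
  shows "y = z"
proof -
  have e1: "y * m = y * m * (z * m)" using assms(5) by (simp add: mult.assoc)
  have e2: "m * z = m * y * (m * z)" using assms(2) by (metis mult.assoc)
  have e: "y * m = z * m" using e1 e2 assms(1,4) by (metis mult.assoc)
  have "y = y * m * y" using assms(3) by simp
  also have "\<dots> = y * (m * z)" using e assms(1,4) by (metis mult.assoc)
  also have "\<dots> = z * m * z" using e assms(1,4) by (metis mult.assoc)
  finally show ?thesis using assms(6) by simp
qed

lemma SA_cinv_has14:
  assumes "invol m = m" "cinv m"
  shows "has14 m"
proof -
  obtain z where z: "m * z = z * m" "m * z * m = m" using assms(2) unfolding cinv_def by blast
  define w where "w = z * m * z"
  have w1: "m * w = w * m" unfolding w_def using z by (metis mult.assoc)
  have w2: "m * w * m = m" unfolding w_def using z by (metis mult.assoc)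
  have w3: "w * m * w = w" unfolding w_def using z by (metis mult.assoc)
  have v1: "m * invol w = invol w * m" using arg_cong[OF w1, of invol] assms(1) by simp
  have v2: "m * invol w * m = m" using arg_cong[OF w2, of invol] assms(1) by (simp add: mult.assoc)
  have v3: "invol w * m * invol w = invol w" using arg_cong[OF w3, of invol] assms(1)
    by (simp add: mult.assoc)
  have ww: "invol w = w" using group_unique[OF v1 v2 v3 w1 w2 w3] .
  have "invol (w * m) = w * m" using ww assms(1) w1 by simp
  then show ?thesis unfolding has14_def using w2 by blast
qed

lemma SA_has14_MP:
  assumes "invol m = m" "has14 m"
  shows "MP_invertible m"
  using assms MP_iff has13_iff by auto

lemma SA_MP_iff_cinv:
  assumes "invol m = m"
  shows "MP_invertible m \<longleftrightarrow> cinv m"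
  using SA_MP_cinv SA_cinv_has14 SA_has14_MP assms by blast

lemma SA_MP_iff_has14:
  assumes "invol m = m"
  shows "MP_invertible m \<longleftrightarrow> has14 m"
  using SA_MP_iff_cinv SA_cinv_has14 SA_has14_MP assms MP_iff by blast

lemma jacobson:
  assumes "cinv (1 - x * y)"
  shows "cinv (1 - y * x)"
proof -
  define A where "A = 1 - x * y"
  define B where "B = 1 - y * x"
  obtain z where z: "A * z = z * A" "A * z * A = A" using assms unfolding cinv_def A_def by blast
  define w where "w = 1 + y * z * x"
  have yA: "B * y = y * A" unfolding A_def B_def by (simp add: algebra_simps)
  have Ax: "x * B = A * x" unfolding A_def B_def by (simp add: algebra_simps)
  have Bw: "B * w = B + y * A * z * x" unfolding w_def using yA
    by (simp add: algebra_simps) (metis mult.assoc)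
  have wB: "w * B = B + y * z * A * x" unfolding w_def using Ax
    by (simp add: algebra_simps)
  have c1: "B * w = w * B" using Bw wB z(1) by (metis mult.assoc)
  have BB: "B * B = B - y * A * x" unfolding A_def B_def by (simp add: algebra_simps)
  have "B * w * B = B * B + y * A * z * (x * B)" using Bw by (simp add: algebra_simps)
  also have "\<dots> = B - y * A * x + y * (A * z * A) * x" using BB Ax by (simp add: mult.assoc)
  also have "\<dots> = B" using z(2) by simp
  finally show ?thesis using c1 unfolding cinv_def B_def by blast
qed

lemma corner:
  assumes "p * p = p" "p * x = x" "x * p = x"
  shows "cinv (1 - p + x) \<longleftrightarrow> cinv x"
proof
  let ?m = "1 - p + x"
  have pm: "p * ?m = x" using assms by (simp add: algebra_simps)
  have mp: "?m * p = x" using assms by (simp add: algebra_simps)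
  assume "cinv ?m"
  then obtain z where z: "?m * z = z * ?m" "?m * z * ?m = ?m" unfolding cinv_def by blast
  define z' where "z' = p * z * p"
  have "x * z' * x = (x * p) * z * (p * x)" unfolding z'_def by (simp add: mult.assoc)
  also have "\<dots> = p * (?m * z * ?m) * p" using assms pm mp by (metis mult.assoc)
  also have "\<dots> = x" using z(2) pm assms by (metis mult.assoc)
  finally have 1: "x * z' * x = x" .
  have "x * z' = x * z * p" unfolding z'_def using assms(3) by (metis mult.assoc)
  also have "\<dots> = p * (?m * z) * p" using pm by (metis mult.assoc)
  also have "\<dots> = p * (z * ?m) * p" using z(1) by simp
  also have "\<dots> = z' * x" unfolding z'_def using mp assms by (metis mult.assoc)
  finally show "cinv x" using 1 unfolding cinv_def by blast
next
  assume "cinv x"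
  then obtain w where w: "x * w = w * x" "x * w * x = x" unfolding cinv_def by blast
  define v where "v = p * w * p"
  have pv: "p * v = v" unfolding v_def using assms(1) by (metis mult.assoc)
  have vp: "v * p = v" unfolding v_def using assms(1) by (metis mult.assoc)
  have xv: "x * v = w * x" unfolding v_def using assms w(1) by (metis mult.assoc)
  have vx: "v * x = w * x" unfolding v_def using assms w(1) by (metis mult.assoc)
  have xvx: "x * v * x = x" using xv w by (metis mult.assoc)
  define z where "z = 1 - p + v"
  have E1: "(1 - p + x) * z = 1 - p + x * v" unfolding z_def using assms pv
    by (simp add: algebra_simps)
  have E2: "z * (1 - p + x) = 1 - p + v * x" unfolding z_def using assms vp
    by (simp add: algebra_simps)
  have E3: "(1 - p + x * v) * (1 - p + x) = 1 - p + x"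
  proof -
    have r1: "x * (v * p) = x * v" using vp by simp
    have r2: "x * (v * x) = x" using xvx by (simp add: mult.assoc)
    show ?thesis using assms r1 r2 by (simp add: algebra_simps)
  qed
  have "(1 - p + x) * z = z * (1 - p + x)" using E1 E2 xv vx by simp
  moreover have "(1 - p + x) * z * (1 - p + x) = 1 - p + x" using E1 E3 by simp
  ultimately show "cinv (1 - p + x)" unfolding cinv_def by blast
qed


lemma MP_invol: "MP_invertible (invol a) \<longleftrightarrow> MP_invertible a"
  using MP_iff has13_iff[of a] has13_iff[of "invol a"] by auto

lemma key:
  assumes pp: "p * p = p" and ps: "invol p = p" and qq: "q * q = q" and qs: "invol q = q"
  shows "MP_invertible (1 - p * q * p) \<longleftrightarrow> MP_invertible (1 - q * p * q)"
    and "MP_invertible (1 - p * q) \<longleftrightarrow> MP_invertible (1 - p * q * p) \<and> MP_invertible (1 - q * p * q)"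
    and "MP_invertible (1 - p * q * p) \<longleftrightarrow> MP_invertible (p - p * q * p)"
proof -
  have pp': "p * (p * y) = p * y" for y by (simp add: mult.assoc[symmetric] pp)
  have qq': "q * (q * y) = q * y" for y by (simp add: mult.assoc[symmetric] qq)
  have sp: "invol (1 - p * q * p) = 1 - p * q * p" using ps qs by (simp add: mult.assoc)
  have sq: "invol (1 - q * p * q) = 1 - q * p * q" using ps qs by (simp add: mult.assoc)
  have e1: "1 - (p * q) * (q * p) = 1 - p * q * p" by (simp add: mult.assoc qq')
  have e2: "1 - (q * p) * (p * q) = 1 - q * p * q" by (simp add: mult.assoc pp')
  show J: "MP_invertible (1 - p * q * p) \<longleftrightarrow> MP_invertible (1 - q * p * q)"
    using SA_MP_iff_cinv[OF sp] SA_MP_iff_cinv[OF sq] jacobson[of "p*q" "q*p"]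
      jacobson[of "q*p" "p*q"] e1 e2 by auto
  have h1: "(1 + p * q - p * q * p) * (1 - p * q + p * q * p) = 1"
    by (simp add: algebra_simps mult.assoc pp')
  have h2: "(1 - p * q + p * q * p) * (1 + p * q - p * q * p) = 1"
    by (simp add: algebra_simps mult.assoc pp')
  have f1: "(1 - p * q + p * q * p) * (1 - p * q * p) = 1 - p * q"
    by (simp add: algebra_simps mult.assoc pp')
  have h3: "(1 + q * p - q * p * q) * (1 - q * p + q * p * q) = 1"
    by (simp add: algebra_simps mult.assoc qq')
  have h4: "(1 - q * p + q * p * q) * (1 + q * p - q * p * q) = 1"
    by (simp add: algebra_simps mult.assoc qq')
  have f2: "(1 - q * p + q * p * q) * (1 - q * p * q) = 1 - q * p"
    by (simp add: algebra_simps mult.assoc qq')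
  have a1: "has14 (1 - p * q) \<longleftrightarrow> MP_invertible (1 - p * q * p)"
    using has14_mult_iff[OF h1 h2, of "1 - p * q * p"] f1 SA_MP_iff_has14[OF sp] by simp
  have a2: "has14 (1 - q * p) \<longleftrightarrow> MP_invertible (1 - q * p * q)"
    using has14_mult_iff[OF h3 h4, of "1 - q * p * q"] f2 SA_MP_iff_has14[OF sq] by simp
  have a3: "has13 (1 - p * q) \<longleftrightarrow> has14 (1 - q * p)"
    using has13_iff[of "1 - p * q"] ps qs by simp
  show "MP_invertible (1 - p * q) \<longleftrightarrow> MP_invertible (1 - p * q * p) \<and> MP_invertible (1 - q * p * q)"
    using MP_iff[of "1 - p * q"] a1 a2 a3 by blast
  have sx: "invol (p - p * q * p) = p - p * q * p" using ps qs by (simp add: mult.assoc)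
  have c1: "1 - p * q * p = 1 - p + (p - p * q * p)" by (simp add: algebra_simps)
  have c2: "p * (p - p * q * p) = p - p * q * p" by (simp add: algebra_simps mult.assoc pp pp')
  have c3: "(p - p * q * p) * p = p - p * q * p" by (simp add: algebra_simps mult.assoc pp pp')
  show "MP_invertible (1 - p * q * p) \<longleftrightarrow> MP_invertible (p - p * q * p)"
  proof -
    have cc: "cinv (1 - p * q * p) \<longleftrightarrow> cinv (p - p * q * p)"
    proof -
      have "cinv (1 - p + (p - p * q * p)) \<longleftrightarrow> cinv (p - p * q * p)"
        by (rule corner[OF pp c2 c3])
      then show ?thesis by (simp only: c1[symmetric])
    qed
    show ?thesis by (simp only: SA_MP_iff_cinv[OF sp] SA_MP_iff_cinv[OF sx] cc)
  qed
qed

end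

lemma prop1: "(B::bool) = D \<Longrightarrow> A = (B \<and> D) \<Longrightarrow> A = B" by blast
lemma prop2: "(B::bool) = C \<Longrightarrow> A = B \<Longrightarrow> X = A \<Longrightarrow> C = X" by blast

theorem theorem2p4:
  fixes p q :: "'a :: ring_invol"
  assumes "projection p" and "projection q"
  shows "(MP_invertible (1 - p * q) \<longleftrightarrow> MP_invertible (1 - p * q * p))
       \<and> (MP_invertible (1 - p * q * p) \<longleftrightarrow> MP_invertible (p - p * q * p))
       \<and> (MP_invertible (p - p * q * p) \<longleftrightarrow> MP_invertible (1 - q * p))
       \<and> (MP_invertible (1 - q * p) \<longleftrightarrow> MP_invertible (1 - q * p * q))
       \<and> (MP_invertible (1 - q * p * q) \<longleftrightarrow> MP_invertible (q - q * p * q))"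
proof -
  have p: "p * p = p" "invol p = p" and q: "q * q = q" "invol q = q"
    using assms unfolding projection_def by auto
  note P = key[OF p q] and Q = key[OF q p]
  have "invol (1 - p * q) = 1 - q * p" using p q by simp
  then have A: "MP_invertible (1 - q * p) \<longleftrightarrow> MP_invertible (1 - p * q)"
    using MP_invol[of "1 - p * q"] by simp
  have I1: "MP_invertible (1 - p * q) \<longleftrightarrow> MP_invertible (1 - p * q * p)"
    by (rule prop1[OF P(1) P(2)])
  have I4: "MP_invertible (1 - q * p) \<longleftrightarrow> MP_invertible (1 - q * p * q)"
    by (rule prop1[OF Q(1) Q(2)])
  have I3: "MP_invertible (p - p * q * p) \<longleftrightarrow> MP_invertible (1 - q * p)"
    by (rule prop2[OF P(3) I1 A])
  show ?thesis using I1 P(3) I3 I4 Q(3) by (intro conjI)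
qed

end
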